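(* Let $\Omega$ be a finite set, $(H_i\mid i\in\Omega)$ finite abelian groups with $|H_i|=|H_l|\geqslant 3$ for all $i,l\in\Omega$, $\mathbf{H}=\prod_{i\in\Omega}H_i$, and $\mathbf{P}=(\Omega,\preccurlyeq_{\mathbf{P}})$ a poset. Let $\Lambda$ be the dual partition of $\mathcal{Q}(\mathbf{H},\mathbf{P})$. Then $\Lambda$ is finer than $\mathcal{Q}(\hat{\mathbf{H}},\overline{\mathbf{P}})$, i.e., every block of $\Lambda$ is contained in some block of $\mathcal{Q}(\hat{\mathbf{H}},\overline{\mathbf{P}})$.
   Context: $\hat{\mathbf{H}}$ is the character group of $\mathbf{H}$, identified with $\prod_{i}\hat{H_i}$ via $\alpha(\beta)=\prod_i\alpha_{(i)}(\beta_{(i)})$. For a codeword $\beta$ (in $\mathbf{H}$ or $\hat{\mathbf{H}}$), $\mathrm{supp}(\beta)$ is the set of coordinates $i$ where $\beta_{(i)}$ is not the identity. For $B\subseteq\Omega$, $\langle B\rangle_{\mathbf{P}}=\{a:\exists b\in B, a\preccurlyeq_{\mathbf{P}}b\}$, and $\mathrm{wt}_{\mathbf{P}}(\beta)=|\langle\mathrm{supp}(\beta)\rangle_{\mathbf{P}}|$. $\mathcal{Q}(\mathbf{H},\mathbf{P})$ is the partition of $\mathbf{H}$ into classes of equal $\mathbf{P}$-weight; $\mathcal{Q}(\hat{\mathbf{H}},\overline{\mathbf{P}})$ is the partition of $\hat{\mathbf{H}}$ into classes of equal $\overline{\mathbf{P}}$-weight, where $\overline{\mathbf{P}}$ is the dual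 poset ($u\preccurlyeq_{\overline{\mathbf{P}}}v\iff v\preccurlyeq_{\mathbf{P}}u$). The dual partition of a partition $\Gamma$ of $\mathbf{H}$ is the partition of $\hat{\mathbf{H}}$ in which $\chi,\psi$ lie in the same block iff $\sum_{b\in B}\chi(b)=\sum_{b\in B}\psi(b)$ for every block $B\in\Gamma$. *)

theory Defs
  imports "HOL-Algebra.Algebra" "HOL-Library.FuncSet" Complex_Main
begin

definition is_char :: "('a, 'b) monoid_scheme \<Rightarrow> ('a \<Rightarrow> complex) \<Rightarrow> bool" where
  "is_char G \<chi> \<longleftrightarrow> \<chi> \<in> carrier G \<rightarrow>\<^sub>E UNIV
     \<and> (\<forall>x\<in>carrier G. \<forall>y\<in>carrier G. \<chi> (x \<otimes>\<^bsub>G\<^esub> y) = \<chi> x * \<chi> y)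
     \<and> (\<forall>x\<in>carrier G. cmod (\<chi> x) = 1)"

definition trivial_char :: "('a, 'b) monoid_scheme \<Rightarrow> ('a \<Rightarrow> complex)" where
  "trivial_char G = (\<lambda>x\<in>carrier G. 1)"

definition prod_carrier :: "'i set \<Rightarrow> ('i \<Rightarrow> ('a, 'b) monoid_scheme) \<Rightarrow> ('i \<Rightarrow> 'a) set" where
  "prod_carrier \<Omega> H = (\<Pi>\<^sub>E i\<in>\<Omega>. carrier (H i))"

text \<open>The character group \<open>hat H\<close>, identified with \<open>\<Prod> \<hat>H_i\<close>.\<close>
definition char_prod :: "'i set \<Rightarrow> ('i \<Rightarrow> ('a, 'b) monoid_scheme) \<Rightarrow> ('i \<Rightarrow> 'a \<Rightarrow> complex) set" where
  "char_prod \<Omega> H = (\<Pi>\<^sub>E i\<in>\<Omega>. {\<chi>. is_char (H i) \<chi>})"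

definition char_eval :: "'i set \<Rightarrow> ('i \<Rightarrow> 'a \<Rightarrow> complex) \<Rightarrow> ('i \<Rightarrow> 'a) \<Rightarrow> complex" where
  "char_eval \<Omega> \<alpha> \<beta> = (\<Prod>i\<in>\<Omega>. \<alpha> i (\<beta> i))"

definition supp_H :: "'i set \<Rightarrow> ('i \<Rightarrow> ('a, 'b) monoid_scheme) \<Rightarrow> ('i \<Rightarrow> 'a) \<Rightarrow> 'i set" where
  "supp_H \<Omega> H \<beta> = {i\<in>\<Omega>. \<beta> i \<noteq> \<one>\<^bsub>H i\<^esub>}"

definition supp_Hhat :: "'i set \<Rightarrow> ('i \<Rightarrow> ('a, 'b) monoid_scheme) \<Rightarrow> ('i \<Rightarrow> 'a \<Rightarrow> complex) \<Rightarrow> 'i set" where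
  "supp_Hhat \<Omega> H \<alpha> = {i\<in>\<Omega>. \<alpha> i \<noteq> trivial_char (H i)}"

definition poset_on :: "'i set \<Rightarrow> ('i \<Rightarrow> 'i \<Rightarrow> bool) \<Rightarrow> bool" where
  "poset_on \<Omega> ple \<longleftrightarrow> (\<forall>a\<in>\<Omega>. ple a a)
     \<and> (\<forall>a\<in>\<Omega>. \<forall>b\<in>\<Omega>. ple a b \<and> ple b a \<longrightarrow> a = b)
     \<and> (\<forall>a\<in>\<Omega>. \<forall>b\<in>\<Omega>. \<forall>c\<in>\<Omega>. ple a b \<and> ple b c \<longrightarrow> ple a c)"

definition dual_order_rel :: "('i \<Rightarrow> 'i \<Rightarrow> bool) \<Rightarrow> ('i \<Rightarrow> 'i \<Rightarrow> bool)" where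
  "dual_order_rel ple = (\<lambda>u v. ple v u)"

definition ideal_gen :: "'i set \<Rightarrow> ('i \<Rightarrow> 'i \<Rightarrow> bool) \<Rightarrow> 'i set \<Rightarrow> 'i set" where
  "ideal_gen \<Omega> ple B = {a\<in>\<Omega>. \<exists>b\<in>B. ple a b}"

definition wt_H :: "'i set \<Rightarrow> ('i \<Rightarrow> ('a, 'b) monoid_scheme) \<Rightarrow> ('i \<Rightarrow> 'i \<Rightarrow> bool) \<Rightarrow> ('i \<Rightarrow> 'a) \<Rightarrow> nat" where
  "wt_H \<Omega> H ple \<beta> = card (ideal_gen \<Omega> ple (supp_H \<Omega> H \<beta>))"

definition wt_Hhat :: "'i set \<Rightarrow> ('i \<Rightarrow> ('a, 'b) monoid_scheme) \<Rightarrow> ('i \<Rightarrow> 'i \<Rightarrow> bool) \<Rightarrow> ('i \<Rightarrow> 'a \<Rightarrow> complex) \<Rightarrow> nat" where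
  "wt_Hhat \<Omega> H ple \<alpha> = card (ideal_gen \<Omega> ple (supp_Hhat \<Omega> H \<alpha>))"

definition level_partition :: "'x set \<Rightarrow> ('x \<Rightarrow> nat) \<Rightarrow> 'x set set" where
  "level_partition S f = (\<lambda>n. {s\<in>S. f s = n}) ` (f ` S)"

definition dual_partition :: "'i set \<Rightarrow> ('i \<Rightarrow> ('a, 'b) monoid_scheme) \<Rightarrow> ('i \<Rightarrow> 'a) set set \<Rightarrow> ('i \<Rightarrow> 'a \<Rightarrow> complex) set set" where
  "dual_partition \<Omega> H Gamma =
     (\<lambda>\<chi>. {\<psi>\<in>char_prod \<Omega> H. \<forall>B\<in>Gamma. (\<Sum>b\<in>B. char_eval \<Omega> \<chi> b) = (\<Sum>b\<in>B. char_eval \<Omega> \<psi> b)})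
       ` char_prod \<Omega> H"

definition finer :: "'x set set \<Rightarrow> 'x set set \<Rightarrow> bool" where
  "finer \<Lambda> Q \<longleftrightarrow> (\<forall>A\<in>\<Lambda>. \<exists>B\<in>Q. A \<subseteq> B)"

end

theory Submission
  imports Defs
begin


lemma char_one:
  fixes G (structure)
  assumes "group G" "is_char G c"
  shows "c \<one>\<^bsub>G\<^esub> = 1"
proof -
  interpret group G by fact
  have "c \<one> = c \<one> * c \<one>" using assms(2) unfolding is_char_def
    by (metis one_closed l_one)
  moreover have "cmod (c \<one>) = 1" using assms(2) unfolding is_char_def by auto
  hence "c \<one> \<noteq> 0" by auto
  ultimately show ?thesis by (metis mult_cancel_left1)
qed

lemma char_sum:
  fixes G (structure)
  assumes "group G" "finite (carrier G)" "is_char G c"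
  shows "(\<Sum>h\<in>carrier G. c h) = (if c = trivial_char G then of_nat (card (carrier G)) else 0)"
proof (cases "c = trivial_char G")
  case True
  then show ?thesis by (simp add: trivial_char_def)
next
  case False
  interpret group G by fact
  have ext: "c \<in> extensional (carrier G)" using assms(3) unfolding is_char_def PiE_def by auto
  have "\<exists>g\<in>carrier G. c g \<noteq> 1"
  proof (rule ccontr)
    assume "\<not> ?thesis"
    hence "c = trivial_char G" unfolding trivial_char_def
      using ext by (intro extensionalityI[OF ext]) auto
    with False show False by simp
  qed
  then obtain g where g: "g \<in> carrier G" "c g \<noteq> 1" by auto
  have "(\<Sum>h\<in>carrier G. c h) = (\<Sum>h\<in>carrier G. c (g \<otimes> h))"
    by (rule sum.reindex_bij_witness[where j="\<lambda>h. inv g \<otimes> h" and i="\<lambda>h. g \<otimes> h"])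
       (use g in \<open>auto simp: m_assoc[symmetric]\<close>)
  also have "\<dots> = c g * (\<Sum>h\<in>carrier G. c h)"
    using assms(3) g unfolding is_char_def by (simp add: sum_distrib_left)
  finally have "(1 - c g) * (\<Sum>h\<in>carrier G. c h) = 0" by (simp add: algebra_simps)
  with g False show ?thesis by simp
qed

definition maxel :: "('i \<Rightarrow> 'i \<Rightarrow> bool) \<Rightarrow> 'i set \<Rightarrow> 'i set" where
  "maxel ple I = {x\<in>I. \<forall>y\<in>I. ple x y \<longrightarrow> y = x}"

definition Tset :: "('i \<Rightarrow> ('a, 'b) monoid_scheme) \<Rightarrow> ('i \<Rightarrow> 'i \<Rightarrow> bool) \<Rightarrow> 'i set \<Rightarrow> 'i \<Rightarrow> 'a set" where
  "Tset H ple I i = (if i \<in> maxel ple I then carrier (H i) - {\<one>\<^bsub>H i\<^esub>}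
      else if i \<in> I then carrier (H i) else {\<one>\<^bsub>H i\<^esub>})"

lemma exists_max:
  assumes "poset_on \<Omega> ple" "finite \<Omega>" "I \<subseteq> \<Omega>" "x \<in> I"
  shows "\<exists>y\<in>maxel ple I. ple x y"
proof -
  let ?P = "\<lambda>y. y \<in> I \<and> ple x y"
  let ?m = "\<lambda>y. card {z\<in>I. ple y z}"
  have fI: "finite I" using assms finite_subset by blast
  have "?P x" using assms unfolding poset_on_def by auto
  from ex_has_least_nat[of ?P x ?m, OF this]
  obtain y where y: "?P y" "\<And>z. ?P z \<Longrightarrow> ?m y \<le> ?m z" by blast
  have "y \<in> maxel ple I"
    unfolding maxel_def
  proof (safe)
    show "y \<in> I" using y by auto
    fix z assume z: "z \<in> I" "ple y z"
    show "z = y"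
    proof (rule ccontr)
      assume ne: "z \<noteq> y"
      have sub: "{w\<in>I. ple z w} \<subset> {w\<in>I. ple y w}"
      proof
        show "{w\<in>I. ple z w} \<subseteq> {w\<in>I. ple y w}"
          using z y assms unfolding poset_on_def by blast
        have "y \<notin> {w\<in>I. ple z w}" using z ne y assms unfolding poset_on_def by blast
        moreover have "y \<in> {w\<in>I. ple y w}" using y assms unfolding poset_on_def by blast
        ultimately show "{w\<in>I. ple z w} \<noteq> {w\<in>I. ple y w}" by blast
      qed
      have "?m z < ?m y" using psubset_card_mono[OF _ sub] fI by auto
      moreover have "?P z" using z y assms unfolding poset_on_def by blast
      ultimately show False using y(2) by force
    qed
  qed
  then show ?thesis using y by blast
qed

lemma fiber_eq:
  assumes po: "poset_on \<Omega> ple" and fin: "finite \<Omega>" and grp: "\<forall>i\<in>\<Omega>. group (H i)"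
    and IO: "I \<subseteq> \<Omega>" and dc: "\<forall>x\<in>I. \<forall>y\<in>\<Omega>. ple y x \<longrightarrow> y \<in> I"
  shows "{\<beta>\<in>prod_carrier \<Omega> H. ideal_gen \<Omega> ple (supp_H \<Omega> H \<beta>) = I} = PiE \<Omega> (Tset H ple I)"
proof (intro equalityI subsetI)
  fix \<beta> assume b: "\<beta> \<in> {\<beta>\<in>prod_carrier \<Omega> H. ideal_gen \<Omega> ple (supp_H \<Omega> H \<beta>) = I}"
  hence bP: "\<beta> \<in> PiE \<Omega> (\<lambda>i. carrier (H i))" and D: "ideal_gen \<Omega> ple (supp_H \<Omega> H \<beta>) = I"
    by (auto simp: prod_carrier_def)
  show "\<beta> \<in> PiE \<Omega> (Tset H ple I)"
  proof (rule PiE_I)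
    fix i assume i: "i \<in> \<Omega>"
    show "\<beta> i \<in> Tset H ple I i"
    proof (cases "i \<in> maxel ple I")
      case True
      then have "i \<in> I" unfolding maxel_def by auto
      then obtain b where bb: "b \<in> supp_H \<Omega> H \<beta>" "ple i b" using D unfolding ideal_gen_def by auto
      have "b \<in> I" using bb D po unfolding ideal_gen_def supp_H_def poset_on_def by auto
      hence "b = i" using True bb unfolding maxel_def by auto
      then show ?thesis using bb True bP i unfolding Tset_def supp_H_def by auto
    next
      case False
      show ?thesis
      proof (cases "i \<in> I")
        case True then show ?thesis using False bP i unfolding Tset_def by auto
      next
        case nI: False
        have "\<beta> i = \<one>\<^bsub>H i\<^esub>"
        proof (rule ccontr)
          assume "\<beta> i \<noteq> \<one>\<^bsub>H i\<^esub>"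
          hence "i \<in> supp_H \<Omega> H \<beta>" using i unfolding supp_H_def by auto
          hence "i \<in> ideal_gen \<Omega> ple (supp_H \<Omega> H \<beta>)" using i po unfolding ideal_gen_def poset_on_def by auto
          with D nI show False by auto
        qed
        then show ?thesis using False nI unfolding Tset_def by auto
      qed
    qed
  next
    fix i assume "i \<notin> \<Omega>" then show "\<beta> i = undefined" using bP by auto
  qed
next
  fix \<beta> assume b: "\<beta> \<in> PiE \<Omega> (Tset H ple I)"
  have bP: "\<beta> \<in> prod_carrier \<Omega> H"
    unfolding prod_carrier_def
  proof (rule PiE_I)
    fix i assume i: "i \<in> \<Omega>"
    have "\<beta> i \<in> Tset H ple I i" using b i by auto
    moreover have "group (H i)" using grp i by auto
    ultimately show "\<beta> i \<in> carrier (H i)" unfolding Tset_def by (auto split: if_splits simp: group.is_monoid monoid.one_closed)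
  next
    fix i assume "i \<notin> \<Omega>" then show "\<beta> i = undefined" using b by auto
  qed
  have "ideal_gen \<Omega> ple (supp_H \<Omega> H \<beta>) = I"
  proof (intro equalityI subsetI)
    fix a assume "a \<in> ideal_gen \<Omega> ple (supp_H \<Omega> H \<beta>)"
    then obtain c where a: "a \<in> \<Omega>" "c \<in> supp_H \<Omega> H \<beta>" "ple a c" unfolding ideal_gen_def by auto
    have "c \<in> I"
    proof (rule ccontr)
      assume "c \<notin> I"
      hence "c \<notin> maxel ple I" unfolding maxel_def by auto
      moreover have "c \<in> \<Omega>" using a unfolding supp_H_def by auto
      ultimately have "\<beta> c \<in> Tset H ple I c" using b by blast
      then have "\<beta> c = \<one>\<^bsub>H c\<^esub>" using \<open>c \<notin> I\<close> \<open>c \<notin> maxel ple I\<close> unfolding Tset_def by auto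
      then show False using a unfolding supp_H_def by auto
    qed
    then show "a \<in> I" using dc a by auto
  next
    fix x assume x: "x \<in> I"
    obtain y where y: "y \<in> maxel ple I" "ple x y" using exists_max[OF po fin IO x] by auto
    have yO: "y \<in> \<Omega>" using y IO unfolding maxel_def by auto
    have "\<beta> y \<in> Tset H ple I y" using b yO by blast
    hence "\<beta> y \<in> carrier (H y) - {\<one>\<^bsub>H y\<^esub>}" using y unfolding Tset_def by auto
    hence "y \<in> supp_H \<Omega> H \<beta>" using yO unfolding supp_H_def by auto
    then show "x \<in> ideal_gen \<Omega> ple (supp_H \<Omega> H \<beta>)" using x IO y unfolding ideal_gen_def by auto
  qed
  then show "\<beta> \<in> {\<beta>\<in>prod_carrier \<Omega> H. ideal_gen \<Omega> ple (supp_H \<Omega> H \<beta>) = I}" using bP by auto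
qed


definition Gsum where
  "Gsum \<Omega> H ple \<chi> I = (\<Sum>\<beta>\<in>{\<beta>\<in>prod_carrier \<Omega> H. ideal_gen \<Omega> ple (supp_H \<Omega> H \<beta>) = I}. char_eval \<Omega> \<chi> \<beta>)"

lemma G_prod:
  assumes po: "poset_on \<Omega> ple" and fin: "finite \<Omega>" and grp: "\<forall>i\<in>\<Omega>. group (H i) \<and> finite (carrier (H i))"
    and IO: "I \<subseteq> \<Omega>" and dc: "\<forall>x\<in>I. \<forall>y\<in>\<Omega>. ple y x \<longrightarrow> y \<in> I"
  shows "Gsum \<Omega> H ple \<chi> I = (\<Prod>i\<in>\<Omega>. \<Sum>h\<in>Tset H ple I i. \<chi> i h)"
proof -
  have "Gsum \<Omega> H ple \<chi> I = (\<Sum>\<beta>\<in>PiE \<Omega> (Tset H ple I). \<Prod>i\<in>\<Omega>. \<chi> i (\<beta> i))"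
  proof -
    have "{\<beta>\<in>prod_carrier \<Omega> H. ideal_gen \<Omega> ple (supp_H \<Omega> H \<beta>) = I} = PiE \<Omega> (Tset H ple I)"
      using fiber_eq[OF po fin _ IO dc, of H] grp by blast
    then show ?thesis unfolding Gsum_def char_eval_def by simp
  qed
  also have "\<dots> = (\<Prod>i\<in>\<Omega>. \<Sum>h\<in>Tset H ple I i. \<chi> i h)"
    by (rule prod_sum_PiE[symmetric]) (use fin grp in \<open>auto simp: Tset_def\<close>)
  finally show ?thesis .
qed

lemma fac_val:
  assumes "group G" "finite (carrier G)" "is_char G c"
  shows "(\<Sum>h\<in>(if P then carrier G - {\<one>\<^bsub>G\<^esub>} else if Q then carrier G else {\<one>\<^bsub>G\<^esub>}). c h) =
    (if P then (if c = trivial_char G then of_nat (card (carrier G)) - 1 else -1)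
     else if Q then (if c = trivial_char G then of_nat (card (carrier G)) else 0) else 1)"
proof -
  have one: "\<one>\<^bsub>G\<^esub> \<in> carrier G" using assms(1) by (simp add: group.is_monoid monoid.one_closed)
  show ?thesis
    using char_sum[OF assms] char_one[OF assms(1,3)] sum_diff1[of "carrier G" c "\<one>\<^bsub>G\<^esub>"] assms(2) one
    by auto
qed


lemma prod_if_const:
  fixes c :: real
  assumes "finite \<Omega>" "A \<subseteq> \<Omega>"
  shows "(\<Prod>i\<in>\<Omega>. if i \<in> A then c else 1) = c ^ card A"
proof -
  have "\<Omega> \<inter> {x. x \<in> A} = A" using assms by auto
  then show ?thesis using assms by (simp add: prod.If_cases)
qed

lemma cmod_nat_minus1: "q \<ge> 1 \<Longrightarrow> cmod (of_nat q - 1) = real (q - 1)"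
proof -
  assume "q \<ge> 1"
  then have "(of_nat q - 1 :: complex) = of_nat (q - 1)" by (simp add: of_nat_diff)
  then show ?thesis by (simp only: norm_of_nat)
qed

lemma key:
  fixes \<Omega> :: "'i set" and H :: "'i \<Rightarrow> ('a, 'b) monoid_scheme" and ple :: "'i \<Rightarrow> 'i \<Rightarrow> bool"
  assumes fin: "finite \<Omega>"
    and grp: "\<forall>i\<in>\<Omega>. group (H i) \<and> finite (carrier (H i))"
    and cq: "\<forall>i\<in>\<Omega>. card (carrier (H i)) = q"
    and q3: "q \<ge> 3"
    and po: "poset_on \<Omega> ple"
    and chi: "\<chi> \<in> char_prod \<Omega> H"
  defines "J \<equiv> supp_Hhat \<Omega> H \<chi>"
  defines "U \<equiv> ideal_gen \<Omega> (dual_order_rel ple) J"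
  defines "M \<equiv> \<Omega> - U"
  defines "Bd \<equiv> {x\<in>U. \<forall>y\<in>\<Omega>. ple y x \<and> y \<noteq> x \<longrightarrow> y \<in> M}"
  defines "I0 \<equiv> M \<union> Bd"
  defines "Sf \<equiv> \<lambda>k. (\<Sum>\<beta>\<in>{\<beta>\<in>prod_carrier \<Omega> H. wt_H \<Omega> H ple \<beta> = k}. char_eval \<Omega> \<chi> \<beta>)"
  shows "\<forall>k>card I0. Sf k = 0"
    and "cmod (Sf (card I0)) = real (q ^ card (I0 - maxel ple I0) * (q - 1) ^ card (maxel ple I0 \<inter> M))"
    and "Sf (card I0) \<noteq> 0"
    and "card (I0 - maxel ple I0) + card (maxel ple I0 \<inter> M) + wt_Hhat \<Omega> H (dual_order_rel ple) \<chi> = card \<Omega>"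
proof -
  have rfl: "\<And>a. a \<in> \<Omega> \<Longrightarrow> ple a a" and anti: "\<And>a b. a \<in> \<Omega> \<Longrightarrow> b \<in> \<Omega> \<Longrightarrow> ple a b \<Longrightarrow> ple b a \<Longrightarrow> a = b"
    and trans: "\<And>a b c. a \<in> \<Omega> \<Longrightarrow> b \<in> \<Omega> \<Longrightarrow> c \<in> \<Omega> \<Longrightarrow> ple a b \<Longrightarrow> ple b c \<Longrightarrow> ple a c"
    using po unfolding poset_on_def by blast+
  have ischar: "\<And>i. i \<in> \<Omega> \<Longrightarrow> is_char (H i) (\<chi> i)" using chi unfolding char_prod_def by auto
  have Jdef: "J = {i\<in>\<Omega>. \<chi> i \<noteq> trivial_char (H i)}" unfolding J_def supp_Hhat_def by simp
  have Udef: "U = {a\<in>\<Omega>. \<exists>b\<in>J. ple b a}" unfolding U_def ideal_gen_def dual_order_rel_def by simp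
  have JU: "J \<subseteq> U" using rfl unfolding Jdef Udef by auto
  have MO: "M \<subseteq> \<Omega>" and UO: "U \<subseteq> \<Omega>" unfolding M_def Udef by auto
  have BdU: "Bd \<subseteq> U" unfolding Bd_def by auto
  have I0O: "I0 \<subseteq> \<Omega>" unfolding I0_def using MO BdU UO by auto
  have MBd: "M \<inter> Bd = {}" unfolding M_def using BdU by auto
  have Mdc: "\<And>x y. x \<in> M \<Longrightarrow> y \<in> \<Omega> \<Longrightarrow> ple y x \<Longrightarrow> y \<in> M"
  proof -
    fix x y assume xy: "x \<in> M" "y \<in> \<Omega>" "ple y x"
    show "y \<in> M"
    proof (rule ccontr)
      assume "y \<notin> M"
      then obtain j where "j \<in> J" "ple j y" using xy unfolding M_def Udef by auto
      moreover have "j \<in> \<Omega>" using \<open>j \<in> J\<close> unfolding Jdef by auto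
      ultimately have "ple j x" using trans xy MO by blast
      then show False using xy \<open>j \<in> J\<close> unfolding M_def Udef by auto
    qed
  qed
  have I0dc: "\<forall>x\<in>I0. \<forall>y\<in>\<Omega>. ple y x \<longrightarrow> y \<in> I0"
    using Mdc unfolding I0_def Bd_def by blast
  have BdJ: "Bd \<subseteq> J"
  proof
    fix x assume x: "x \<in> Bd"
    then obtain j where j: "j \<in> J" "ple j x" "x \<in> \<Omega>" unfolding Bd_def Udef by auto
    have "j \<in> \<Omega>" using j unfolding Jdef by auto
    show "x \<in> J"
    proof (rule ccontr)
      assume "x \<notin> J"
      hence "j \<noteq> x" using j by auto
      hence "j \<in> M" using x j \<open>j \<in> \<Omega>\<close> unfolding Bd_def by auto
      then show False using JU j unfolding M_def by auto
    qed
  qed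
  have Bdmax: "Bd \<subseteq> maxel ple I0"
  proof
    fix x assume x: "x \<in> Bd"
    have xO: "x \<in> \<Omega>" using x BdU UO by auto
    show "x \<in> maxel ple I0" unfolding maxel_def
    proof (safe)
      show "x \<in> I0" using x unfolding I0_def by auto
      fix y assume y: "y \<in> I0" "ple x y"
      have yO: "y \<in> \<Omega>" using y I0O by auto
      show "y = x"
      proof (cases "y \<in> M")
        case True
        then have "x \<in> M" using Mdc xO y by blast
        then show ?thesis using x MBd by auto
      next
        case False
        then have "y \<in> Bd" using y unfolding I0_def by auto
        show ?thesis
        proof (rule ccontr)
          assume "y \<noteq> x"
          hence "x \<in> M" using \<open>y \<in> Bd\<close> xO y unfolding Bd_def by auto
          then show False using x MBd by auto
        qed
      qed
    qed
  qed
  have maxI0: "maxel ple I0 \<subseteq> I0" unfolding maxel_def by auto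
  have grp': "\<forall>i\<in>\<Omega>. group (H i)" using grp by auto
  have Dprops: "\<And>\<beta>. ideal_gen \<Omega> ple (supp_H \<Omega> H \<beta>) \<subseteq> \<Omega> \<and>
      (\<forall>x\<in>ideal_gen \<Omega> ple (supp_H \<Omega> H \<beta>). \<forall>y\<in>\<Omega>. ple y x \<longrightarrow> y \<in> ideal_gen \<Omega> ple (supp_H \<Omega> H \<beta>))"
    unfolding ideal_gen_def supp_H_def using trans by blast
  have facv: "\<And>I i. i \<in> \<Omega> \<Longrightarrow> (\<Sum>h\<in>Tset H ple I i. \<chi> i h) =
    (if i \<in> maxel ple I then (if i \<notin> J then of_nat q - 1 else -1)
     else if i \<in> I then (if i \<notin> J then of_nat q else 0) else 1)"
  proof -
    fix I i assume i: "i \<in> \<Omega>"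
    show "?thesis I i"
      unfolding Tset_def
      using fac_val[of "H i" "\<chi> i" "i \<in> maxel ple I" "i \<in> I"] grp i ischar[OF i] cq
      unfolding Jdef by auto
  qed
  have Gsub: "\<And>I. I \<subseteq> \<Omega> \<Longrightarrow> (\<forall>x\<in>I. \<forall>y\<in>\<Omega>. ple y x \<longrightarrow> y \<in> I) \<Longrightarrow> Gsum \<Omega> H ple \<chi> I \<noteq> 0 \<Longrightarrow> I \<subseteq> I0"
  proof -
    fix I assume IO: "I \<subseteq> \<Omega>" and dc: "\<forall>x\<in>I. \<forall>y\<in>\<Omega>. ple y x \<longrightarrow> y \<in> I" and G: "Gsum \<Omega> H ple \<chi> I \<noteq> 0"
    have "(\<Prod>i\<in>\<Omega>. \<Sum>h\<in>Tset H ple I i. \<chi> i h) \<noteq> 0" using G G_prod[OF po fin grp IO dc] by simp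
    hence nz: "\<And>i. i \<in> \<Omega> \<Longrightarrow> (\<Sum>h\<in>Tset H ple I i. \<chi> i h) \<noteq> 0" using fin by auto
    have nJ: "\<And>i. i \<in> I \<Longrightarrow> i \<notin> maxel ple I \<Longrightarrow> i \<notin> J"
    proof -
      fix i assume "i \<in> I" "i \<notin> maxel ple I"
      then show "i \<notin> J" using nz[of i] facv[of i I] IO by (auto split: if_splits)
    qed
    show "I \<subseteq> I0"
    proof
      fix x assume x: "x \<in> I"
      have xO: "x \<in> \<Omega>" using x IO by auto
      show "x \<in> I0"
      proof (cases "x \<in> M")
        case True then show ?thesis unfolding I0_def by auto
      next
        case False
        hence xU: "x \<in> U" using xO unfolding M_def by auto
        have "\<forall>y\<in>\<Omega>. ple y x \<and> y \<noteq> x \<longrightarrow> y \<in> M"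
        proof (intro ballI impI)
          fix y assume y: "y \<in> \<Omega>" "ple y x \<and> y \<noteq> x"
          show "y \<in> M"
          proof (rule ccontr)
            assume "y \<notin> M"
            then obtain j where j: "j \<in> J" "ple j y" using y unfolding M_def Udef by auto
            have jO: "j \<in> \<Omega>" using j unfolding Jdef by auto
            have jx: "ple j x" using trans[OF jO y(1) xO] j y by blast
            have "j \<in> I" using dc x jO jx by blast
            moreover have "j \<noteq> x"
            proof
              assume "j = x"
              then have "ple x y" using j by simp
              then show False using anti[OF xO y(1)] y by auto
            qed
            hence "j \<notin> maxel ple I" using x jx unfolding maxel_def by auto
            ultimately show False using nJ j by blast
          qed
        qed
        then have "x \<in> Bd" using xU unfolding Bd_def by auto
        then show ?thesis unfolding I0_def by auto
      qed
    qed
  qed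
  have G0: "Gsum \<Omega> H ple \<chi> I0 = (\<Prod>i\<in>\<Omega>. (if i \<in> maxel ple I0 \<inter> M then of_nat q - 1 else if i \<in> Bd then -1
       else if i \<in> I0 - maxel ple I0 then of_nat q else 1))"
    unfolding G_prod[OF po fin grp I0O I0dc]
    using BdJ Bdmax JU MBd maxI0 unfolding I0_def
    by (intro prod.cong refl) (auto simp: facv M_def)
  define A where "A = maxel ple I0 \<inter> M"
  define C where "C = I0 - maxel ple I0"
  have AO: "A \<subseteq> \<Omega>" and CO: "C \<subseteq> \<Omega>" unfolding A_def C_def using MO I0O by auto
  have ACd: "A \<inter> C = {}" unfolding A_def C_def by auto
  have BCd: "Bd \<inter> C = {}" and BAd: "Bd \<inter> A = {}" unfolding A_def C_def using Bdmax MBd by auto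
  have cG0: "cmod (Gsum \<Omega> H ple \<chi> I0) = real (q ^ card C * (q - 1) ^ card A)"
  proof -
    have "cmod (Gsum \<Omega> H ple \<chi> I0) = (\<Prod>i\<in>\<Omega>. (if i \<in> A then real (q - 1) else 1) * (if i \<in> C then real q else 1))"
      unfolding G0 prod_norm[symmetric]
    proof (intro prod.cong refl)
      fix i assume i: "i \<in> \<Omega>"
      show "cmod (if i \<in> maxel ple I0 \<inter> M then of_nat q - 1 else if i \<in> Bd then -1
       else if i \<in> I0 - maxel ple I0 then of_nat q else 1) =
         (if i \<in> A then real (q - 1) else 1) * (if i \<in> C then real q else 1)"
        using ACd BCd BAd cmod_nat_minus1[of q] q3 unfolding A_def[symmetric] C_def[symmetric]
        by auto
    qed
    also have "\<dots> = real (q - 1) ^ card A * real q ^ card C"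
      by (simp add: prod.distrib prod_if_const[OF fin AO] prod_if_const[OF fin CO])
    finally show ?thesis by simp
  qed
  have G0nz: "Gsum \<Omega> H ple \<chi> I0 \<noteq> 0"
  proof
    assume "Gsum \<Omega> H ple \<chi> I0 = 0"
    then have "cmod (Gsum \<Omega> H ple \<chi> I0) = 0" by simp
    then show False using cG0 q3 by simp
  qed
  have finPC: "finite (prod_carrier \<Omega> H)" unfolding prod_carrier_def using fin grp by (auto intro: finite_PiE)
  define D where "D = (\<lambda>\<beta>. ideal_gen \<Omega> ple (supp_H \<Omega> H \<beta>))"
  define S where "S = (\<lambda>k. {\<beta>\<in>prod_carrier \<Omega> H. wt_H \<Omega> H ple \<beta> = k})"
  have Sfg: "Sf k = (\<Sum>I\<in>D ` S k. Gsum \<Omega> H ple \<chi> I)" for k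
  proof -
    have fS: "finite (S k)" unfolding S_def using finPC by auto
    have "Sf k = (\<Sum>I\<in>D ` S k. \<Sum>\<beta>\<in>{\<beta>\<in>S k. D \<beta> = I}. char_eval \<Omega> \<chi> \<beta>)"
      unfolding Sf_def S_def[symmetric] using sum.group[where g=D and h="char_eval \<Omega> \<chi>", OF fS finite_imageI[OF fS] subset_refl]
      by (simp add: S_def)
    also have "\<dots> = (\<Sum>I\<in>D ` S k. Gsum \<Omega> H ple \<chi> I)"
    proof (intro sum.cong refl)
      fix I assume "I \<in> D ` S k"
      then have "card I = k" unfolding S_def D_def wt_H_def by auto
      then have "{\<beta>\<in>S k. D \<beta> = I} = {\<beta>\<in>prod_carrier \<Omega> H. ideal_gen \<Omega> ple (supp_H \<Omega> H \<beta>) = I}"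
        unfolding S_def D_def wt_H_def by auto
      then show "(\<Sum>\<beta>\<in>{\<beta>\<in>S k. D \<beta> = I}. char_eval \<Omega> \<chi> \<beta>) = Gsum \<Omega> H ple \<chi> I"
        unfolding Gsum_def by simp
    qed
    finally show ?thesis .
  qed
  have finI0: "finite I0" using I0O fin finite_subset by blast
  have Sbig: "Sf k = (if I0 \<in> D ` S k then Gsum \<Omega> H ple \<chi> I0 else 0)" if k: "k \<ge> card I0" for k
  proof -
    have "Sf k = (\<Sum>I\<in>D ` S k. if I = I0 then Gsum \<Omega> H ple \<chi> I0 else 0)"
      unfolding Sfg
    proof (intro sum.cong refl)
      fix I assume I: "I \<in> D ` S k"
      then obtain \<beta> where "I = D \<beta>" "\<beta> \<in> S k" by auto
      then have cI: "card I = k" and IO: "I \<subseteq> \<Omega>" and dc: "\<forall>x\<in>I. \<forall>y\<in>\<Omega>. ple y x \<longrightarrow> y \<in> I"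
        using Dprops[of \<beta>] unfolding S_def D_def wt_H_def by auto
      show "Gsum \<Omega> H ple \<chi> I = (if I = I0 then Gsum \<Omega> H ple \<chi> I0 else 0)"
      proof (cases "Gsum \<Omega> H ple \<chi> I = 0")
        case False
        then have "I \<subseteq> I0" using Gsub[OF IO dc] by blast
        then have "I = I0" using card_seteq[OF finI0] cI k by blast
        then show ?thesis by simp
      qed auto
    qed
    also have "\<dots> = (if I0 \<in> D ` S k then Gsum \<Omega> H ple \<chi> I0 else 0)"
      using finPC unfolding S_def by simp
    finally show ?thesis .
  qed
  show "\<forall>k>card I0. Sf k = 0"
  proof (intro allI impI)
    fix k assume k: "k > card I0"
    have "I0 \<notin> D ` S k" using k unfolding S_def D_def wt_H_def by auto
    then show "Sf k = 0" using Sbig[of k] k by simp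
  qed
  have inI0: "I0 \<in> D ` S (card I0)"
  proof -
    have "{\<beta>\<in>prod_carrier \<Omega> H. ideal_gen \<Omega> ple (supp_H \<Omega> H \<beta>) = I0} \<noteq> {}"
      using G0nz unfolding Gsum_def by (metis (no_types, lifting) sum.empty)
    then obtain \<beta> where "\<beta> \<in> prod_carrier \<Omega> H" "D \<beta> = I0" unfolding D_def by auto
    then show ?thesis unfolding S_def wt_H_def D_def by force
  qed
  have SI0: "Sf (card I0) = Gsum \<Omega> H ple \<chi> I0" using Sbig[of "card I0"] inI0 by simp
  show "cmod (Sf (card I0)) = real (q ^ card (I0 - maxel ple I0) * (q - 1) ^ card (maxel ple I0 \<inter> M))"
    using SI0 cG0 unfolding A_def C_def by simp
  show "Sf (card I0) \<noteq> 0" using SI0 G0nz by simp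
  have "M = C \<union> A" using Bdmax MBd I0_def maxI0 unfolding A_def C_def by auto
  hence cM: "card M = card C + card A" using ACd card_Un_disjoint finite_subset[OF CO fin] finite_subset[OF AO fin] by auto
  have "wt_Hhat \<Omega> H (dual_order_rel ple) \<chi> = card U" unfolding wt_Hhat_def U_def J_def by simp
  moreover have "card M + card U = card \<Omega>" unfolding M_def using UO fin
    by (metis card_Diff_subset finite_subset le_add_diff_inverse2 card_mono)
  ultimately show "card (I0 - maxel ple I0) + card (maxel ple I0 \<inter> M) + wt_Hhat \<Omega> H (dual_order_rel ple) \<chi> = card \<Omega>"
    using cM unfolding A_def C_def by simp
qed




lemma pow_unique:
  fixes q :: nat
  assumes q3: "q \<ge> 3" and eq: "q ^ c * (q - 1) ^ a = q ^ c' * (q - 1) ^ a'"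
  shows "c = c' \<and> a = a'"
proof -
  have cop: "coprime q (q - 1)"
    by (rule coprime_diff_one_right_nat) (use q3 in simp)
  have cop1: "coprime (q ^ n) ((q - 1) ^ m)" for n m using cop by simp
  have cop2: "coprime ((q - 1) ^ n) (q ^ m)" for n m using cop by (simp add: coprime_commute)
  have q1: "1 < q" and q2: "1 < q - 1" using q3 by auto
  have "q ^ c dvd q ^ c' * (q - 1) ^ a'" using eq by (metis dvd_triv_left)
  hence "q ^ c dvd q ^ c'" using coprime_dvd_mult_left_iff[OF cop1] by blast
  hence c1: "c \<le> c'" using power_dvd_imp_le q1 by blast
  have "q ^ c' dvd q ^ c * (q - 1) ^ a" using eq by (metis dvd_triv_left)
  hence "q ^ c' dvd q ^ c" using coprime_dvd_mult_left_iff[OF cop1] by blast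
  hence c2: "c' \<le> c" using power_dvd_imp_le q1 by blast
  have "(q - 1) ^ a dvd q ^ c' * (q - 1) ^ a'" using eq by (metis dvd_triv_right)
  hence "(q - 1) ^ a dvd (q - 1) ^ a'" using coprime_dvd_mult_right_iff[OF cop2] by blast
  hence a1: "a \<le> a'" using power_dvd_imp_le q2 by blast
  have "(q - 1) ^ a' dvd q ^ c * (q - 1) ^ a" using eq by (metis dvd_triv_right)
  hence "(q - 1) ^ a' dvd (q - 1) ^ a" using coprime_dvd_mult_right_iff[OF cop2] by blast
  hence a2: "a' \<le> a" using power_dvd_imp_le q2 by blast
  show ?thesis using c1 c2 a1 a2 by simp
qed

theorem theorem2p2:
  fixes \<Omega> :: "'i set" and H :: "'i \<Rightarrow> ('a, 'b) monoid_scheme" and ple :: "'i \<Rightarrow> 'i \<Rightarrow> bool"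
  assumes "finite \<Omega>"
    and "\<forall>i\<in>\<Omega>. comm_group (H i) \<and> finite (carrier (H i))"
    and "\<forall>i\<in>\<Omega>. \<forall>l\<in>\<Omega>. card (carrier (H i)) = card (carrier (H l))"
    and "\<forall>i\<in>\<Omega>. card (carrier (H i)) \<ge> 3"
    and "poset_on \<Omega> ple"
  shows "finer (dual_partition \<Omega> H (level_partition (prod_carrier \<Omega> H) (wt_H \<Omega> H ple)))
               (level_partition (char_prod \<Omega> H) (wt_Hhat \<Omega> H (dual_order_rel ple)))"
proof (cases "\<Omega> = {}")
  case True
  have "wt_Hhat \<Omega> H (dual_order_rel ple) \<chi> = 0" for \<chi> unfolding wt_Hhat_def ideal_gen_def using True by simp
  then have wt0: "\<And>\<chi>. wt_Hhat \<Omega> H (dual_order_rel ple) \<chi> = 0" by blast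
  show ?thesis unfolding finer_def
  proof
    fix A assume "A \<in> dual_partition \<Omega> H (level_partition (prod_carrier \<Omega> H) (wt_H \<Omega> H ple))"
    then obtain \<chi> where chi: "\<chi> \<in> char_prod \<Omega> H" and AC: "A \<subseteq> char_prod \<Omega> H"
      unfolding dual_partition_def by (auto simp: image_iff)
    have "{s\<in>char_prod \<Omega> H. wt_Hhat \<Omega> H (dual_order_rel ple) s = wt_Hhat \<Omega> H (dual_order_rel ple) \<chi>}
       \<in> level_partition (char_prod \<Omega> H) (wt_Hhat \<Omega> H (dual_order_rel ple))"
      unfolding level_partition_def using chi by blast
    moreover have "A \<subseteq> {s\<in>char_prod \<Omega> H. wt_Hhat \<Omega> H (dual_order_rel ple) s = wt_Hhat \<Omega> H (dual_order_rel ple) \<chi>}"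
      using AC wt0 by auto
    ultimately show "\<exists>B\<in>level_partition (char_prod \<Omega> H) (wt_Hhat \<Omega> H (dual_order_rel ple)). A \<subseteq> B" by blast
  qed
next
  case False
  then obtain i0 where i0: "i0 \<in> \<Omega>" by auto
  define q where "q = card (carrier (H i0))"
  have cq: "\<forall>i\<in>\<Omega>. card (carrier (H i)) = q"
  proof
    fix i assume "i \<in> \<Omega>"
    then show "card (carrier (H i)) = q" using assms(3) i0 unfolding q_def by blast
  qed
  have q3: "q \<ge> 3" using assms(4) i0 unfolding q_def by blast
  have grp: "\<forall>i\<in>\<Omega>. group (H i) \<and> finite (carrier (H i))"
  proof
    fix i assume i: "i \<in> \<Omega>"
    then have "comm_group (H i)" "finite (carrier (H i))" using assms(2) by auto
    then show "group (H i) \<and> finite (carrier (H i))" using comm_group.axioms(2) by auto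
  qed
  let ?Sf = "\<lambda>\<chi> k. (\<Sum>\<beta>\<in>{\<beta>\<in>prod_carrier \<Omega> H. wt_H \<Omega> H ple \<beta> = k}. char_eval \<Omega> \<chi> \<beta>)"
  have main: "wt_Hhat \<Omega> H (dual_order_rel ple) \<chi> = wt_Hhat \<Omega> H (dual_order_rel ple) \<psi>"
    if chi: "\<chi> \<in> char_prod \<Omega> H" and psi: "\<psi> \<in> char_prod \<Omega> H" and eqS: "\<And>k. ?Sf \<chi> k = ?Sf \<psi> k" for \<chi> \<psi>
  proof -
    note K1 = key[OF assms(1) grp cq q3 assms(5) chi]
    note K2 = key[OF assms(1) grp cq q3 assms(5) psi]
    obtain I1 c1 a1 where k1: "\<forall>k>I1. ?Sf \<chi> k = 0" "cmod (?Sf \<chi> I1) = real (q ^ c1 * (q - 1) ^ a1)"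
      "?Sf \<chi> I1 \<noteq> 0" "c1 + a1 + wt_Hhat \<Omega> H (dual_order_rel ple) \<chi> = card \<Omega>"
      using K1 by blast
    obtain I2 c2 a2 where k2: "\<forall>k>I2. ?Sf \<psi> k = 0" "cmod (?Sf \<psi> I2) = real (q ^ c2 * (q - 1) ^ a2)"
      "?Sf \<psi> I2 \<noteq> 0" "c2 + a2 + wt_Hhat \<Omega> H (dual_order_rel ple) \<psi> = card \<Omega>"
      using K2 by blast
    have "I1 = I2"
    proof (rule ccontr)
      assume "I1 \<noteq> I2"
      then consider "I1 < I2" | "I2 < I1" by linarith
      then show False
      proof cases
        case 1
        have "?Sf \<chi> I2 = 0" using k1(1) 1 by blast
        then show False using k2(3) eqS[of I2] by simp
      next
        case 2
        have "?Sf \<psi> I1 = 0" using k2(1) 2 by blast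
        then show False using k1(3) eqS[of I1] by simp
      qed
    qed
    then have "?Sf \<chi> I1 = ?Sf \<psi> I2" using eqS[of I1] by simp
    then have "real (q ^ c1 * (q - 1) ^ a1) = real (q ^ c2 * (q - 1) ^ a2)" using k1(2) k2(2) by simp
    then have "q ^ c1 * (q - 1) ^ a1 = q ^ c2 * (q - 1) ^ a2" by (simp only: of_nat_eq_iff)
    then have "c1 = c2 \<and> a1 = a2" using pow_unique[OF q3] by blast
    then show ?thesis using k1(4) k2(4) by simp
  qed
  show ?thesis
    unfolding finer_def
  proof
    fix A assume "A \<in> dual_partition \<Omega> H (level_partition (prod_carrier \<Omega> H) (wt_H \<Omega> H ple))"
    then obtain \<chi> where chi: "\<chi> \<in> char_prod \<Omega> H" and Adef: "A = {\<psi>\<in>char_prod \<Omega> H. \<forall>B\<in>level_partition (prod_carrier \<Omega> H) (wt_H \<Omega> H ple).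
         (\<Sum>b\<in>B. char_eval \<Omega> \<chi> b) = (\<Sum>b\<in>B. char_eval \<Omega> \<psi> b)}"
      unfolding dual_partition_def by auto
    let ?B = "{s\<in>char_prod \<Omega> H. wt_Hhat \<Omega> H (dual_order_rel ple) s = wt_Hhat \<Omega> H (dual_order_rel ple) \<chi>}"
    have "?B \<in> level_partition (char_prod \<Omega> H) (wt_Hhat \<Omega> H (dual_order_rel ple))"
      unfolding level_partition_def using chi by blast
    moreover have "A \<subseteq> ?B"
    proof
      fix \<psi> assume "\<psi> \<in> A"
      then have psi: "\<psi> \<in> char_prod \<Omega> H" and eqB: "\<forall>B\<in>level_partition (prod_carrier \<Omega> H) (wt_H \<Omega> H ple).
         (\<Sum>b\<in>B. char_eval \<Omega> \<chi> b) = (\<Sum>b\<in>B. char_eval \<Omega> \<psi> b)" unfolding Adef by auto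
      have "?Sf \<chi> k = ?Sf \<psi> k" for k
      proof (cases "k \<in> wt_H \<Omega> H ple ` prod_carrier \<Omega> H")
        case True
        then have "{\<beta>\<in>prod_carrier \<Omega> H. wt_H \<Omega> H ple \<beta> = k} \<in> level_partition (prod_carrier \<Omega> H) (wt_H \<Omega> H ple)"
          unfolding level_partition_def by blast
        then show ?thesis using eqB by blast
      next
        case False
        then have "{\<beta>\<in>prod_carrier \<Omega> H. wt_H \<Omega> H ple \<beta> = k} = {}" by auto
        then show ?thesis by (simp only: sum.empty)
      qed
      then have "wt_Hhat \<Omega> H (dual_order_rel ple) \<chi> = wt_Hhat \<Omega> H (dual_order_rel ple) \<psi>"
        using main[OF chi psi] by blast
      then show "\<psi> \<in> ?B" using psi by simp
    qed
    ultimately show "\<exists>B\<in>level_partition (char_prod \<Omega> H) (wt_Hhat \<Omega> H (dual_order_rel ple)). A \<subseteq> B" by blast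
  qed
qed

end
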